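(* Let $q\ge 2$ and let $f:H(2,q)\to\mathbb{R}$ be an additive function with $|S(f)|\le 2(q-1)$. Then one of the following holds: (1) $f\equiv 0$; (2) there exist $i\in\{1,2\}$, $k\in\{0,\dots,q-1\}$ and a constant $c\neq 0$ such that $f(x)=c$ for $x\in T_k(i,2)$ and $f(x)=0$ otherwise; (3) there exist $i\ne j$ in $\{1,2\}$, $k,m\in\{0,\dots,q-1\}$ and a constant $c\ne 0$ such that $f(x)=c$ for $x\in T_k(i,2)\setminus T_m(j,2)$, $f(x)=-c$ for $x\in T_m(j,2)\setminus T_k(i,2)$, and $f(x)=0$ otherwise.
   Context: The Hamming graph $H(N,q)$ has vertex set $\{0,1,\dots,q-1\}^N$, two words being adjacent iff they differ in exactly one coordinate. For $f:H(N,q)\to\mathbb{R}$, its support is $S(f)=\{x: f(x)\ne 0\}$. $T_k(i,N)$ denotes the set of vertices of $H(N,q)$ whose $i$-th coordinate equals $k$. For $f:H(N,q)\to\mathbb{R}$ ($N\ge1$), $i\in\{1,\dots,N\}$ and $k,m\in\{0,\dots,q-1\}$, define $g_{i,k,m}:H(N-1,q)\to\mathbb{R}$ by $g_{i,k,m}(t)=f(x)-f(y)$, where $x$ and $y$ are obtained from $t$ by inserting $k$, resp. $m$, as the $i$-th coordinate. The function $f$ is called additive if all functions $g_{i,k,m}$ are constant. *)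

theory Defs
  imports Main "HOL.Real"
begin

text \<open>Vertices of the Hamming graph H(N,q): words of length N over {0,...,q-1},
  represented as lists. Coordinates are numbered 1..N (coordinate i is list index i-1).\<close>
definition hamming_vertices :: "nat \<Rightarrow> nat \<Rightarrow> nat list set" where
  "hamming_vertices N q = {x. length x = N \<and> set x \<subseteq> {..<q}}"

definition insert_coord :: "nat \<Rightarrow> nat \<Rightarrow> nat list \<Rightarrow> nat list" where
  "insert_coord i k t = take (i - 1) t @ [k] @ drop (i - 1) t"

definition g_fun :: "(nat list \<Rightarrow> real) \<Rightarrow> nat \<Rightarrow> nat \<Rightarrow> nat \<Rightarrow> nat list \<Rightarrow> real" where
  "g_fun f i k m t = f (insert_coord i k t) - f (insert_coord i m t)"

definition additive :: "nat \<Rightarrow> nat \<Rightarrow> (nat list \<Rightarrow> real) \<Rightarrow> bool" where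
  "additive N q f \<longleftrightarrow> (\<forall>i\<in>{1..N}. \<forall>k<q. \<forall>m<q. \<exists>c. \<forall>t\<in>hamming_vertices (N - 1) q. g_fun f i k m t = c)"

definition support :: "nat \<Rightarrow> nat \<Rightarrow> (nat list \<Rightarrow> real) \<Rightarrow> nat list set" where
  "support N q f = {x \<in> hamming_vertices N q. f x \<noteq> 0}"

definition T :: "nat \<Rightarrow> nat \<Rightarrow> nat \<Rightarrow> nat \<Rightarrow> nat list set" where
  "T q k i N = {x \<in> hamming_vertices N q. x ! (i - 1) = k}"

end

theory Submission
  imports Defs
begin

definition Zs :: "nat \<Rightarrow> (nat \<Rightarrow> real) \<Rightarrow> (nat \<Rightarrow> real) \<Rightarrow> (nat \<times> nat) set" where
  "Zs q u v = {(a,b). a<q \<and> b<q \<and> u a + v b \<noteq> 0}"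

lemma Zs_fin: "finite (Zs q u v)"
  by (rule finite_subset[of _ "{..<q}\<times>{..<q}"]) (auto simp: Zs_def)

lemma Zs_swap: "card (Zs q u v) = card (Zs q v u)"
proof -
  have "Zs q v u = prod.swap ` Zs q u v" by (auto simp: Zs_def add.commute image_iff)
  then show ?thesis by (simp add: card_image)
qed

lemma Zs_ge:
  assumes "A \<subseteq> Zs q u v" shows "card A \<le> card (Zs q u v)"
  using assms Zs_fin card_mono by blast

lemma col:
  assumes nc: "\<exists>a<q. \<exists>a'<q. u a \<noteq> u a'" and cd: "card (Zs q v u) \<le> 2*q-2"
  shows "\<exists>b0<q. \<exists>a1<q. \<forall>a<q. (u a + v b0 \<noteq> 0 \<longleftrightarrow> a = a1)"
proof (rule ccontr)
  assume H: "\<not> ?thesis"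
  define B where "B b = {a. a<q \<and> u a + v b \<noteq> 0}" for b
  have eq: "Zs q v u = Sigma {..<q} B" by (auto simp: Zs_def B_def add.commute)
  have "\<forall>b\<in>{..<q}. 2 \<le> card (B b)"
  proof
    fix b assume b: "b \<in> {..<q}"
    have fin: "finite (B b)" by (auto simp: B_def)
    have "B b \<noteq> {}"
    proof
      assume "B b = {}"
      then have "\<forall>a<q. u a = - v b" by (auto simp: B_def)
      with nc show False by auto
    qed
    then obtain a1 where a1: "a1 \<in> B b" by auto
    have "B b \<noteq> {a1}"
    proof
      assume "B b = {a1}"
      then have "\<forall>a<q. (u a + v b \<noteq> 0 \<longleftrightarrow> a = a1)" by (auto simp: B_def set_eq_iff)
      moreover have "a1 < q" using a1 by (auto simp: B_def)
      ultimately show False using H b by auto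
    qed
    then obtain a2 where "a2 \<in> B b" "a2 \<noteq> a1" using a1 by auto
    then have "{a1,a2} \<subseteq> B b" using a1 by auto
    from card_mono[OF fin this] show "2 \<le> card (B b)" using \<open>a2 \<noteq> a1\<close> by auto
  qed
  then have "(\<Sum>b<q. 2) \<le> (\<Sum>b<q. card (B b))" by (intro sum_mono) auto
  moreover have "card (Sigma {..<q} B) = (\<Sum>b<q. card (B b))"
    by (rule card_SigmaI) (auto simp: B_def)
  moreover have "q \<ge> 1" using nc by auto
  ultimately have "2*q \<le> 2*q-2" using cd eq by simp
  then show False using \<open>q \<ge> 1\<close> by linarith
qed

lemma const_u:
  assumes q: "q \<ge> 2" and t: "\<forall>a<q. u a = t" and cd: "card (Zs q u v) \<le> 2*q-2"
  shows "(\<forall>a<q. \<forall>b<q. u a + v b = 0) \<or> (\<exists>k<q. \<exists>c. c \<noteq> 0 \<and> (\<forall>a<q. \<forall>b<q. u a + v b = (if b = k then c else 0)))"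
proof (cases "\<forall>b<q. v b = - t")
  case True then show ?thesis using t by auto
next
  case False
  then obtain k where k: "k<q" "v k \<noteq> -t" by auto
  have oth: "v b = -t" if "b<q" "b \<noteq> k" for b
  proof (rule ccontr)
    assume "v b \<noteq> -t"
    then have "{..<q} \<times> {k,b} \<subseteq> Zs q u v" using k t that by (auto simp: Zs_def)
    from Zs_ge[OF this] have "card ({..<q} \<times> {k,b}) \<le> 2*q-2" using cd by linarith
    moreover have "card ({..<q} \<times> {k,b}) = q * 2" using that
      by (simp add: card_cartesian_product)
    ultimately show False using q by arith
  qed
  have "t + v k \<noteq> 0" using k(2) by linarith
  moreover have "\<forall>a<q. \<forall>b<q. u a + v b = (if b = k then t + v k else 0)"
    using t oth by auto
  ultimately show ?thesis using k(1) by blast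
qed

lemma main_uv:
  assumes q: "q \<ge> 2" and cd: "card (Zs q u v) \<le> 2*q-2"
  shows "(\<forall>a<q. \<forall>b<q. u a + v b = 0)
    \<or> (\<exists>k<q. \<exists>c. c \<noteq> 0 \<and> (\<forall>a<q. \<forall>b<q. u a + v b = (if a = k then c else 0)))
    \<or> (\<exists>k<q. \<exists>c. c \<noteq> 0 \<and> (\<forall>a<q. \<forall>b<q. u a + v b = (if b = k then c else 0)))
    \<or> (\<exists>k<q. \<exists>m<q. \<exists>c. c \<noteq> 0 \<and> (\<forall>a<q. \<forall>b<q. u a + v b =
         (if a = k \<and> b \<noteq> m then c else if b = m \<and> a \<noteq> k then -c else 0)))"
proof (cases "\<exists>a<q. \<exists>a'<q. u a \<noteq> u a'")
  case False
  have q0: "0 < q" using q by simp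
  have "\<forall>a<q. u a = u 0" using False q0 by blast
  from const_u[OF q this cd]
  consider (z) "\<forall>a<q. \<forall>b<q. u a + v b = 0"
    | (k) k c where "k<q" "c \<noteq> 0" "\<forall>a<q. \<forall>b<q. u a + v b = (if b = k then c else 0)"
    by blast
  then show ?thesis
  proof cases
    case z then show ?thesis by (intro disjI1)
  next
    case k
    have "\<exists>k<q. \<exists>c. c \<noteq> 0 \<and> (\<forall>a<q. \<forall>b<q. u a + v b = (if b = k then c else 0))"
      using k by blast
    then show ?thesis by (intro disjI2 disjI1)
  qed
next
  case ncu: True
  show ?thesis
  proof (cases "\<exists>b<q. \<exists>b'<q. v b \<noteq> v b'")
    case False
    have q0: "0 < q" using q by simp
    have "\<forall>b<q. v b = v 0" using False q0 by blast
    have cd': "card (Zs q v u) \<le> 2*q-2" using cd Zs_swap[of q u v] by simp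
    from const_u[OF q \<open>\<forall>b<q. v b = v 0\<close> cd']
    consider (z) "\<forall>b<q. \<forall>a<q. v b + u a = 0"
      | (k) k c where "k<q" "c \<noteq> 0" "\<forall>b<q. \<forall>a<q. v b + u a = (if a = k then c else 0)"
      by blast
    then show ?thesis
    proof cases
      case z
      then have "\<forall>a<q. \<forall>b<q. u a + v b = 0" by (simp add: add.commute)
      then show ?thesis by (intro disjI1)
    next
      case k
      then have "\<forall>a<q. \<forall>b<q. u a + v b = (if a = k then c else 0)" by (simp add: add.commute)
      then have "\<exists>k<q. \<exists>c. c \<noteq> 0 \<and> (\<forall>a<q. \<forall>b<q. u a + v b = (if a = k then c else 0))"
        using k(1,2) by blast
      then show ?thesis by (intro disjI2 disjI1)
    qed
  next
    case ncv: True
    have cd'': "card (Zs q v u) \<le> 2*q-2" using cd Zs_swap[of q u v] by simp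
    from col[OF ncu cd''] obtain b0 a1 where b0: "b0<q" "a1<q" and ha: "\<forall>a<q. (u a + v b0 \<noteq> 0 \<longleftrightarrow> a = a1)"
      by auto
    from col[OF ncv cd] obtain a0 b1 where a0: "a0<q" "b1<q" and hb: "\<forall>b<q. (v b + u a0 \<noteq> 0 \<longleftrightarrow> b = b1)"
      by auto
    define t0 where "t0 = - v b0"
    define s0 where "s0 = - u a0"
    have hu: "\<And>a. a<q \<Longrightarrow> a \<noteq> a1 \<Longrightarrow> u a = t0" using ha unfolding t0_def by force
    have hu1: "u a1 \<noteq> t0" using ha b0 unfolding t0_def by force
    have hv: "\<And>b. b<q \<Longrightarrow> b \<noteq> b1 \<Longrightarrow> v b = s0" using hb unfolding s0_def by force
    have hv1: "v b1 \<noteq> s0" using hb a0 unfolding s0_def by force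
    have "\<exists>ax. ax < q \<and> u ax + v b1 \<noteq> 0"
    proof -
      obtain a a' where "a<q" "a'<q" "u a \<noteq> u a'" using ncu by blast
      then show ?thesis by (metis add_right_cancel)
    qed
    then obtain ax where ax: "ax < q" "u ax + v b1 \<noteq> 0" by blast
    have "\<exists>bx. bx < q \<and> u a1 + v bx \<noteq> 0"
    proof -
      obtain b b' where "b<q" "b'<q" "v b \<noteq> v b'" using ncv by blast
      then show ?thesis by (metis add_left_cancel)
    qed
    then obtain bx where bx: "bx < q" "u a1 + v bx \<noteq> 0" by blast
    have qq: "2*(q-1) \<le> q*(q-1)" using q by (intro mult_le_mono1) auto
    show ?thesis
    proof (cases "t0 + s0 = 0")
      case False
      have c1: "u a1 + s0 = 0"
      proof (rule ccontr)
        assume nz: "u a1 + s0 \<noteq> 0"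
        let ?A = "insert (ax,b1) ({..<q} \<times> ({..<q}-{b1}))"
        have m: "(x,y) \<in> Zs q u v" if "x<q" "y<q" "y\<noteq>b1" for x y
          using hv[OF that(2,3)] hu[of x] nz False that by (cases "x = a1") (auto simp: Zs_def)
        have "(ax,b1) \<in> Zs q u v" using ax a0 by (simp add: Zs_def)
        then have "?A \<subseteq> Zs q u v" using m by blast
        from Zs_ge[OF this] cd have "card ?A \<le> 2*q-2" by linarith
        moreover have "card ?A = q*(q-1)+1" using a0 by (simp add: card_cartesian_product)
        ultimately show False using qq q by linarith
      qed
      have c2: "t0 + v b1 = 0"
      proof (rule ccontr)
        assume nz: "t0 + v b1 \<noteq> 0"
        let ?A = "insert (a1,bx) (({..<q}-{a1}) \<times> {..<q})"
        have m: "(x,y) \<in> Zs q u v" if "x<q" "y<q" "x\<noteq>a1" for x y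
          using hu[OF that(1,3)] hv[of y] nz False that by (cases "y = b1") (auto simp: Zs_def)
        have "(a1,bx) \<in> Zs q u v" using bx b0 by (simp add: Zs_def)
        then have "?A \<subseteq> Zs q u v" using m by blast
        from Zs_ge[OF this] cd have "card ?A \<le> 2*q-2" by linarith
        moreover have "card ?A = (q-1)*q+1" using b0 by (simp add: card_cartesian_product)
        moreover have "(q-1)*q = q*(q-1)" by (rule mult.commute)
        ultimately show False using qq q by linarith
      qed
      let ?A = "insert (a1,b1) (({..<q}-{a1}) \<times> ({..<q}-{b1}))"
      have m: "(x,y) \<in> Zs q u v" if "x<q" "y<q" "x\<noteq>a1" "y\<noteq>b1" for x y
          using hu[OF that(1,3)] hv[OF that(2,4)] False that by (auto simp: Zs_def)
      have "u a1 + v b1 \<noteq> 0" using c1 c2 False by linarith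
      then have "(a1,b1) \<in> Zs q u v" using a0 b0 by (simp add: Zs_def)
      then have "?A \<subseteq> Zs q u v" using m by blast
      from Zs_ge[OF this] cd have "card ?A \<le> 2*q-2" by linarith
      moreover have "card ?A = (q-1)*(q-1)+1" using a0 b0 by (simp add: card_cartesian_product)
      ultimately have "q = 2"
      proof -
        assume h: "card ?A \<le> 2*q-2" "card ?A = (q-1)*(q-1)+1"
        show "q = 2"
        proof (rule ccontr)
          assume "q \<noteq> 2"
          then have "2*(q-1) \<le> (q-1)*(q-1)" using q by (intro mult_le_mono1) auto
          then show False using h q by linarith
        qed
      qed
      define k where "k = 1 - a1"
      have k: "k < q" "k \<noteq> a1" and kk: "\<And>a. a<q \<Longrightarrow> a \<noteq> a1 \<Longrightarrow> a = k"
        using \<open>q=2\<close> b0 unfolding k_def by auto presburger+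
      have "\<forall>a<q. \<forall>b<q. u a + v b =
         (if a = k \<and> b \<noteq> b1 then t0+s0 else if b = b1 \<and> a \<noteq> k then -(t0+s0) else 0)"
      proof (intro allI impI)
        fix a b assume ab: "a<q" "b<q"
        show "u a + v b = (if a = k \<and> b \<noteq> b1 then t0+s0 else if b = b1 \<and> a \<noteq> k then -(t0+s0) else 0)"
          using hu[of a] hv[of b] kk[of a] k c1 c2 ab by (cases "a = a1"; cases "b = b1") auto
      qed
      then show ?thesis using k a0 False by blast
    next
      case True
      have d: "u a1 + v b1 = 0"
      proof (rule ccontr)
        assume nz: "u a1 + v b1 \<noteq> 0"
        let ?A = "({a1} \<times> {..<q}) \<union> (({..<q}-{a1}) \<times> {b1})"
        have m1: "(a1,y) \<in> Zs q u v" if "y<q" for y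
          using hv[of y] nz True hu1 that b0 by (cases "y = b1") (auto simp: Zs_def)
        have m2: "(x,b1) \<in> Zs q u v" if "x<q" "x \<noteq> a1" for x
          using hu[OF that] True hv1 that a0 by (auto simp: Zs_def)
        have "?A \<subseteq> Zs q u v" using m1 m2 by blast
        from Zs_ge[OF this] cd have "card ?A \<le> 2*q-2" by linarith
        moreover have "card ?A = q + (q-1)" using a0 b0
          by (subst card_Un_disjoint) (auto simp: card_cartesian_product)
        ultimately show False using q by linarith
      qed
      have "\<forall>a<q. \<forall>b<q. u a + v b =
         (if a = a1 \<and> b \<noteq> b1 then u a1 - t0 else if b = b1 \<and> a \<noteq> a1 then -(u a1 - t0) else 0)"
      proof (intro allI impI)
        fix a b assume ab: "a<q" "b<q"
        show "u a + v b = (if a = a1 \<and> b \<noteq> b1 then u a1 - t0 else if b = b1 \<and> a \<noteq> a1 then -(u a1 - t0) else 0)"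
          using hu[of a] hv[of b] True d ab by (cases "a = a1"; cases "b = b1") auto
      qed
      moreover have "u a1 - t0 \<noteq> 0" using hu1 by simp
      ultimately show ?thesis using a0 b0 by blast
    qed
  qed
qed

lemma hv2: "x \<in> hamming_vertices 2 q \<longleftrightarrow> (\<exists>a b. x = [a,b] \<and> a<q \<and> b<q)"
proof
  assume "x \<in> hamming_vertices 2 q"
  then have l: "length x = 2" and s: "set x \<subseteq> {..<q}" by (auto simp: hamming_vertices_def)
  from l obtain a b where "x = [a,b]" by (auto simp: length_Suc_conv numeral_2_eq_2)
  with s show "\<exists>a b. x = [a,b] \<and> a<q \<and> b<q" by auto
next
  assume "\<exists>a b. x = [a,b] \<and> a<q \<and> b<q"
  then show "x \<in> hamming_vertices 2 q" by (auto simp: hamming_vertices_def)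
qed

lemma T1: "[a,b] \<in> T q k 1 2 \<longleftrightarrow> [a,b] \<in> hamming_vertices 2 q \<and> a = k"
  by (simp add: T_def)

lemma T2: "[a,b] \<in> T q k 2 2 \<longleftrightarrow> [a,b] \<in> hamming_vertices 2 q \<and> b = k"
  by (simp add: T_def)

theorem lemma3:
  fixes q :: nat and f :: "nat list \<Rightarrow> real"
  assumes "q \<ge> 2"
    and "additive 2 q f"
    and "card (support 2 q f) \<le> 2 * (q - 1)"
  shows "(\<forall>x\<in>hamming_vertices 2 q. f x = 0)
    \<or> (\<exists>i\<in>{1,2}. \<exists>k<q. \<exists>c::real. c \<noteq> 0 \<and>
          (\<forall>x\<in>hamming_vertices 2 q. f x = (if x \<in> T q k i 2 then c else 0)))
    \<or> (\<exists>i\<in>{1,2}. \<exists>j\<in>{1,2}. i \<noteq> j \<and> (\<exists>k<q. \<exists>m<q. \<exists>c::real. c \<noteq> 0 \<and>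
          (\<forall>x\<in>hamming_vertices 2 q.
             f x = (if x \<in> T q k i 2 - T q m j 2 then c
                    else if x \<in> T q m j 2 - T q k i 2 then - c else 0))))"
proof -
  define u where "u a = f [a,0]" for a
  define v where "v b = f [0,b] - f [0,0]" for b
  have q0: "0 < q" using assms(1) by simp
  have dec: "f [a,b] = u a + v b" if ab: "a<q" "b<q" for a b
  proof -
    have "\<forall>k<q. \<forall>m<q. \<exists>c. \<forall>t\<in>hamming_vertices (2 - 1) q. g_fun f 1 k m t = c"
      using assms(2) unfolding additive_def by simp
    then obtain c where c: "\<forall>t\<in>hamming_vertices (2 - 1) q. g_fun f 1 a 0 t = c"
      using ab q0 by blast
    have h1: "[b] \<in> hamming_vertices (2-1) q" "[0] \<in> hamming_vertices (2-1) q"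
      using ab q0 by (auto simp: hamming_vertices_def)
    have "g_fun f 1 a 0 [b] = g_fun f 1 a 0 [0]" using c h1 by simp
    then show ?thesis by (simp add: g_fun_def insert_coord_def u_def v_def)
  qed
  have supp: "support 2 q f = (\<lambda>(a,b). [a,b]) ` Zs q u v"
  proof
    show "support 2 q f \<subseteq> (\<lambda>(a,b). [a,b]) ` Zs q u v"
    proof
      fix x assume "x \<in> support 2 q f"
      then have x: "x \<in> hamming_vertices 2 q" "f x \<noteq> 0" by (auto simp: support_def)
      then obtain a b where ab: "x = [a,b]" "a<q" "b<q" using hv2 by blast
      then have "(a,b) \<in> Zs q u v" using x dec by (simp add: Zs_def)
      then show "x \<in> (\<lambda>(a,b). [a,b]) ` Zs q u v" using ab by force
    qed
  next
    show "(\<lambda>(a,b). [a,b]) ` Zs q u v \<subseteq> support 2 q f"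
    proof
      fix x assume "x \<in> (\<lambda>(a,b). [a,b]) ` Zs q u v"
      then obtain a b where ab: "x = [a,b]" "(a,b) \<in> Zs q u v" by auto
      then have "a<q" "b<q" "u a + v b \<noteq> 0" by (auto simp: Zs_def)
      then show "x \<in> support 2 q f" using ab dec hv2 by (auto simp: support_def)
    qed
  qed
  have "inj_on (\<lambda>(a::nat,b::nat). [a,b]) (Zs q u v)" by (auto simp: inj_on_def)
  then have "card (support 2 q f) = card (Zs q u v)" using supp card_image by metis
  then have cd: "card (Zs q u v) \<le> 2*q-2" using assms(3) by simp
  from main_uv[OF assms(1) cd] show ?thesis
  proof (elim disjE exE conjE)
    assume H: "\<forall>a<q. \<forall>b<q. u a + v b = 0"
    have "\<forall>x\<in>hamming_vertices 2 q. f x = 0"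
    proof
      fix x assume "x \<in> hamming_vertices 2 q"
      then obtain a b where "x = [a,b]" "a<q" "b<q" using hv2 by blast
      then show "f x = 0" using H dec by simp
    qed
    then show ?thesis by (intro disjI1)
  next
    fix k c assume k: "k<q" and c: "c \<noteq> 0" and H: "\<forall>a<q. \<forall>b<q. u a + v b = (if a = k then c else 0)"
    have "\<forall>x\<in>hamming_vertices 2 q. f x = (if x \<in> T q k 1 2 then c else 0)"
    proof
      fix x assume x: "x \<in> hamming_vertices 2 q"
      then obtain a b where ab: "x = [a,b]" "a<q" "b<q" using hv2 by blast
      then show "f x = (if x \<in> T q k 1 2 then c else 0)" using H dec x T1 by simp
    qed
    then show ?thesis using k c by blast
  next
    fix k c assume k: "k<q" and c: "c \<noteq> 0" and H: "\<forall>a<q. \<forall>b<q. u a + v b = (if b = k then c else 0)"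
    have "\<forall>x\<in>hamming_vertices 2 q. f x = (if x \<in> T q k 2 2 then c else 0)"
    proof
      fix x assume x: "x \<in> hamming_vertices 2 q"
      then obtain a b where ab: "x = [a,b]" "a<q" "b<q" using hv2 by blast
      then show "f x = (if x \<in> T q k 2 2 then c else 0)" using H dec x T2 by simp
    qed
    then show ?thesis using k c by blast
  next
    fix k m c assume k: "k<q" and m: "m<q" and c: "c \<noteq> 0" and
      H: "\<forall>a<q. \<forall>b<q. u a + v b = (if a = k \<and> b \<noteq> m then c else if b = m \<and> a \<noteq> k then -c else 0)"
    have "\<forall>x\<in>hamming_vertices 2 q.
             f x = (if x \<in> T q k 1 2 - T q m 2 2 then c
                    else if x \<in> T q m 2 2 - T q k 1 2 then - c else 0)"
    proof
      fix x assume x: "x \<in> hamming_vertices 2 q"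
      then obtain a b where ab: "x = [a,b]" "a<q" "b<q" using hv2 by blast
      then show "f x = (if x \<in> T q k 1 2 - T q m 2 2 then c
                    else if x \<in> T q m 2 2 - T q k 1 2 then - c else 0)" using H dec x T1 T2 by simp
    qed
    then have "\<exists>k<q. \<exists>m<q. \<exists>c::real. c \<noteq> 0 \<and> (\<forall>x\<in>hamming_vertices 2 q.
             f x = (if x \<in> T q k 1 2 - T q m 2 2 then c
                    else if x \<in> T q m 2 2 - T q k 1 2 then - c else 0))" using k m c by blast
    then have "1 \<noteq> (2::nat) \<and> (\<exists>k<q. \<exists>m<q. \<exists>c::real. c \<noteq> 0 \<and> (\<forall>x\<in>hamming_vertices 2 q.
             f x = (if x \<in> T q k 1 2 - T q m 2 2 then c
                    else if x \<in> T q m 2 2 - T q k 1 2 then - c else 0)))" by simp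
    then have "\<exists>j\<in>{1,2}. 1 \<noteq> j \<and> (\<exists>k<q. \<exists>m<q. \<exists>c::real. c \<noteq> 0 \<and> (\<forall>x\<in>hamming_vertices 2 q.
             f x = (if x \<in> T q k 1 2 - T q m j 2 then c
                    else if x \<in> T q m j 2 - T q k 1 2 then - c else 0)))"
      by (rule bexI[where x=2]) simp
    then have "\<exists>i\<in>{1,2}. \<exists>j\<in>{1,2}. i \<noteq> j \<and> (\<exists>k<q. \<exists>m<q. \<exists>c::real. c \<noteq> 0 \<and> (\<forall>x\<in>hamming_vertices 2 q.
             f x = (if x \<in> T q k i 2 - T q m j 2 then c
                    else if x \<in> T q m j 2 - T q k i 2 then - c else 0)))"
      by (rule bexI[where x=1]) simp
    then show ?thesis by (intro disjI2)
  qed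
qed

end
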